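(* Let $G$ be a compact Hausdorff group with normalized Haar measure $m_G$, and let $\Phi$ be a Young function satisfying the $\Delta_2$-condition. Let $\mathscr{F}_{\Phi,0}:L^\Phi(G)\to c_0\text{-}\bigoplus_{[\pi]\in\widehat{G}}\mathcal{B}_2(\mathcal{H}_\pi)$ be the Fourier transform $f\mapsto\widehat f$, and let $\nu_{\Phi,0}:\mathcal{B}(G)\to c_0\text{-}\bigoplus_{[\pi]\in\widehat{G}}\mathcal{B}_2(\mathcal{H}_\pi)$ be the vector measure $\nu_{\Phi,0}(A)=\widehat{\chi_A}$. Then $\nu_{\Phi,0}$ has finite variation, and its variation coincides with the Haar measure: $|\nu_{\Phi,0}|(A)=m_G(A)$ for every Borel set $A\subseteq G$.
   Context: $\mathcal{B}(G)$ is the Borel $\sigma$-algebra of $G$. A Young function is a convex $\Phi:[0,\infty]\to[0,\infty]$ with $\Phi(0)=0$ and $\lim_{x\to\infty}\Phi(x)=\infty$; it satisfies the $\Delta_2$-condition if there are $K>0$, $x_0>0$ with $\Phi(2x)\le K\Phi(x)$ for all $x\ge x_0$. $L^\Phi(G)$ is the space of (classes of) complex measurable functions $f$ with finite Luxemburg norm $\|f\|_\Phi=\inf\{k>0:\int_G\Phi(|f|/k)\,dm_G\le1\}$; it is contained in $L^1(G)$. $\widehat G$ is the set of equivalence classes of irreducible unitary representations $\pi$ of $G$ on (finite-dimensional) Hilbert spaces $\mathcal{H}_\pi$ of dimension $d_\pi$; for $f\in L^1(G)$, $\widehat f(\pi)=\int_G f(t)\pi(t)^*\,dm_G(t)$.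 $\mathcal{B}_2(\mathcal{H}_\pi)$ denotes the operators on $\mathcal{H}_\pi$, normed by the operator norm. The space $c_0\text{-}\bigoplus_{[\pi]}\mathcal{B}_2(\mathcal{H}_\pi)$ consists of families $(x_{[\pi]})$ with $x_{[\pi]}\in\mathcal{B}_2(\mathcal{H}_\pi)$ such that for every $\varepsilon>0$ only finitely many $[\pi]$ have $\|x_{[\pi]}\|\ge\varepsilon$, with norm $\sup_{[\pi]}\|x_{[\pi]}\|$. For a vector measure $\nu$ with values in a Banach space $X$, its variation is $|\nu|(A)=\sup\sum_{E\in\rho}\|\nu(E)\|$, the supremum over finite Borel partitions $\rho$ of $A$. *)

theory Defs
  imports "HOL-Probability.Probability"
begin

definition young_function :: "(ennreal \<Rightarrow> ennreal) \<Rightarrow> bool" where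
  "young_function \<Phi> \<longleftrightarrow>
     (\<forall>x y t. 0 \<le> t \<and> t \<le> 1 \<longrightarrow>
        \<Phi> (ennreal t * x + ennreal (1 - t) * y) \<le> ennreal t * \<Phi> x + ennreal (1 - t) * \<Phi> y)
   \<and> \<Phi> 0 = 0
   \<and> ((\<lambda>x::real. \<Phi> (ennreal x)) \<longlongrightarrow> \<infinity>) at_top"

definition delta2 :: "(ennreal \<Rightarrow> ennreal) \<Rightarrow> bool" where
  "delta2 \<Phi> \<longleftrightarrow> (\<exists>K::real>0. \<exists>x0::real>0. \<forall>x\<ge>x0. \<Phi> (ennreal (2 * x)) \<le> ennreal K * \<Phi> (ennreal x))"

text \<open>The group is written additively (class group_add, not necessarily commutative).
  A normalized Haar measure is a left-invariant Radon probability measure on the Borel sets.\<close>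

definition haar_prob_measure :: "'g::{topological_group_add,t2_space} measure \<Rightarrow> bool" where
  "haar_prob_measure M \<longleftrightarrow>
     sets M = sets borel
   \<and> emeasure M UNIV = 1
   \<and> (\<forall>A\<in>sets borel. \<forall>g. emeasure M ((\<lambda>x. g + x) ` A) = emeasure M A)
   \<and> (\<forall>A\<in>sets borel. emeasure M A = (INF U\<in>{U. open U \<and> A \<subseteq> U}. emeasure M U))
   \<and> (\<forall>U. open U \<longrightarrow> emeasure M U = (SUP K\<in>{K. compact K \<and> K \<subseteq> U}. emeasure M K))"

definition matvec :: "nat \<Rightarrow> (nat \<Rightarrow> nat \<Rightarrow> complex) \<Rightarrow> (nat \<Rightarrow> complex) \<Rightarrow> (nat \<Rightarrow> complex)" where
  "matvec d A v = (\<lambda>i. if i < d then (\<Sum>j<d. A i j * v j) else 0)"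

definition cvecs :: "nat \<Rightarrow> (nat \<Rightarrow> complex) set" where
  "cvecs d = {v. \<forall>k\<ge>d. v k = 0}"

definition csubspace :: "nat \<Rightarrow> (nat \<Rightarrow> complex) set \<Rightarrow> bool" where
  "csubspace d V \<longleftrightarrow> V \<subseteq> cvecs d \<and> (\<lambda>_. 0) \<in> V
     \<and> (\<forall>v\<in>V. \<forall>w\<in>V. (\<lambda>k. v k + w k) \<in> V)
     \<and> (\<forall>c. \<forall>v\<in>V. (\<lambda>k. c * v k) \<in> V)"

definition unitary_rep :: "nat \<Rightarrow> ('g::{topological_group_add} \<Rightarrow> nat \<Rightarrow> nat \<Rightarrow> complex) \<Rightarrow> bool" where
  "unitary_rep d \<pi> \<longleftrightarrow>
     (\<forall>g. \<forall>i<d. \<forall>j<d. (\<Sum>k<d. cnj (\<pi> g k i) * \<pi> g k j) = (if i = j then 1 else 0))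
   \<and> (\<forall>g h. \<forall>i<d. \<forall>j<d. \<pi> (g + h) i j = (\<Sum>k<d. \<pi> g i k * \<pi> h k j))
   \<and> (\<forall>i<d. \<forall>j<d. continuous_on UNIV (\<lambda>g. \<pi> g i j))"

definition irreducible_unitary_rep :: "nat \<Rightarrow> ('g::{topological_group_add} \<Rightarrow> nat \<Rightarrow> nat \<Rightarrow> complex) \<Rightarrow> bool" where
  "irreducible_unitary_rep d \<pi> \<longleftrightarrow> d \<ge> 1 \<and> unitary_rep d \<pi>
   \<and> (\<forall>V. csubspace d V \<and> (\<forall>g. \<forall>v\<in>V. matvec d (\<pi> g) v \<in> V)
          \<longrightarrow> V = {\<lambda>_. 0} \<or> V = cvecs d)"

definition vnorm :: "nat \<Rightarrow> (nat \<Rightarrow> complex) \<Rightarrow> real" where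
  "vnorm d v = sqrt (\<Sum>i<d. (cmod (v i))\<^sup>2)"

definition opnorm :: "nat \<Rightarrow> (nat \<Rightarrow> nat \<Rightarrow> complex) \<Rightarrow> real" where
  "opnorm d A = (SUP v\<in>{v\<in>cvecs d. vnorm d v \<le> 1}. vnorm d (matvec d A v))"

text \<open>hat(chi_A)(pi) = integral over A of pi(t)^*; entry (i,j) is the integral of conj(pi t j i).\<close>
definition fourier_indicator ::
  "'g measure \<Rightarrow> 'g set \<Rightarrow> ('g \<Rightarrow> nat \<Rightarrow> nat \<Rightarrow> complex) \<Rightarrow> nat \<Rightarrow> nat \<Rightarrow> complex" where
  "fourier_indicator M A \<pi> = (\<lambda>i j. LINT t:A|M. cnj (\<pi> t j i))"

text \<open>Norm of nu(A) = hat(chi_A) in the c_0-direct sum of the B_2(H_pi) (operator norms):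
  supremum over the irreducible unitary representations. Equivalent representations give
  unitarily equivalent coefficients, so the supremum over representatives equals the
  supremum over classes in the dual.\<close>
definition nu_norm :: "'g::{topological_group_add} measure \<Rightarrow> 'g set \<Rightarrow> ennreal" where
  "nu_norm M A = (SUP p\<in>{(d, \<pi>). irreducible_unitary_rep d \<pi>}.
                    ennreal (opnorm (fst p) (fourier_indicator M A (snd p))))"

definition borel_partitions :: "'g::topological_space set \<Rightarrow> 'g set set set" where
  "borel_partitions A = {\<rho>. finite \<rho> \<and> \<rho> \<subseteq> sets borel \<and> disjoint \<rho> \<and> \<Union>\<rho> = A}"

definition nu_variation :: "'g::{topological_group_add} measure \<Rightarrow> 'g set \<Rightarrow> ennreal" where
  "nu_variation M A = (SUP \<rho>\<in>borel_partitions A. \<Sum>E\<in>\<rho>. nu_norm M E)"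

end

theory Submission
  imports Defs
begin

lemma entry_bound:
  assumes "unitary_rep d \<pi>" "i < d" "j < d"
  shows "cmod (\<pi> g i j) \<le> 1"
proof -
  have "(\<Sum>k<d. cnj (\<pi> g k j) * \<pi> g k j) = 1"
    using assms unfolding unitary_rep_def by auto
  moreover have "(\<Sum>k<d. cnj (\<pi> g k j) * \<pi> g k j) = of_real (\<Sum>k<d. (cmod (\<pi> g k j))\<^sup>2)"
    unfolding of_real_sum complex_norm_square by (simp add: mult.commute)
  ultimately have s: "(\<Sum>k<d. (cmod (\<pi> g k j))\<^sup>2) = 1"
    by (metis of_real_eq_1_iff)
  have "(cmod (\<pi> g i j))\<^sup>2 \<le> (\<Sum>k<d. (cmod (\<pi> g k j))\<^sup>2)"
    by (rule member_le_sum) (use assms in auto)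
  then have "(cmod (\<pi> g i j))\<^sup>2 \<le> 1" using s by simp
  then show ?thesis by (simp add: power_le_one_iff abs_le_square_iff)
qed

lemma norm_pres:
  assumes "unitary_rep d \<pi>"
  shows "(\<Sum>j<d. (cmod (\<Sum>i<d. \<pi> g j i * x i))\<^sup>2) = (\<Sum>i<d. (cmod (x i))\<^sup>2)"
proof -
  have U: "\<And>i i'. i < d \<Longrightarrow> i' < d \<Longrightarrow> (\<Sum>j<d. cnj (\<pi> g j i') * \<pi> g j i) = (if i' = i then 1 else 0)"
    using assms unfolding unitary_rep_def by auto
  have "(of_real (\<Sum>j<d. (cmod (\<Sum>i<d. \<pi> g j i * x i))\<^sup>2) :: complex)
      = (\<Sum>j<d. (\<Sum>i<d. \<pi> g j i * x i) * cnj (\<Sum>i'<d. \<pi> g j i' * x i'))"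
    unfolding of_real_sum complex_norm_square by simp
  also have "\<dots> = (\<Sum>j<d. \<Sum>i<d. \<Sum>i'<d. x i * cnj (x i') * (cnj (\<pi> g j i') * \<pi> g j i))"
  proof (rule sum.cong[OF refl])
    fix j
    have "(\<Sum>i<d. \<pi> g j i * x i) * cnj (\<Sum>i'<d. \<pi> g j i' * x i')
        = (\<Sum>i<d. \<Sum>i'<d. (\<pi> g j i * x i) * cnj (\<pi> g j i' * x i'))"
      by (simp add: sum_product cnj_sum)
    also have "\<dots> = (\<Sum>i<d. \<Sum>i'<d. x i * cnj (x i') * (cnj (\<pi> g j i') * \<pi> g j i))"
      by (intro sum.cong refl) (simp add: mult_ac)
    finally show "(\<Sum>i<d. \<pi> g j i * x i) * cnj (\<Sum>i'<d. \<pi> g j i' * x i')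
        = (\<Sum>i<d. \<Sum>i'<d. x i * cnj (x i') * (cnj (\<pi> g j i') * \<pi> g j i))" .
  qed
  also have "\<dots> = (\<Sum>i<d. \<Sum>i'<d. x i * cnj (x i') * (\<Sum>j<d. cnj (\<pi> g j i') * \<pi> g j i))"
  proof -
    have "(\<Sum>j<d. \<Sum>i<d. \<Sum>i'<d. x i * cnj (x i') * (cnj (\<pi> g j i') * \<pi> g j i))
       = (\<Sum>i<d. \<Sum>j<d. \<Sum>i'<d. x i * cnj (x i') * (cnj (\<pi> g j i') * \<pi> g j i))"
      by (rule sum.swap)
    also have "\<dots> = (\<Sum>i<d. \<Sum>i'<d. \<Sum>j<d. x i * cnj (x i') * (cnj (\<pi> g j i') * \<pi> g j i))"
      by (rule sum.cong[OF refl], rule sum.swap)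
    finally show ?thesis by (simp add: sum_distrib_left)
  qed
  also have "\<dots> = (\<Sum>i<d. \<Sum>i'<d. x i * cnj (x i') * (if i' = i then 1 else 0))"
    by (intro sum.cong refl) (simp add: U)
  also have "\<dots> = (\<Sum>i<d. x i * cnj (x i))"
  proof (rule sum.cong[OF refl])
    fix i assume "i \<in> {..<d}"
    have "(\<Sum>i'<d. x i * cnj (x i') * (if i' = i then 1 else 0)) = (\<Sum>i'<d. if i' = i then x i * cnj (x i) else 0)"
      by (rule sum.cong) simp_all
    also have "\<dots> = x i * cnj (x i)" using \<open>i \<in> {..<d}\<close> by (simp add: sum.delta)
    finally show "(\<Sum>i'<d. x i * cnj (x i') * (if i' = i then 1 else 0)) = x i * cnj (x i)" .
  qed
  also have "\<dots> = of_real (\<Sum>i<d. (cmod (x i))\<^sup>2)"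
    unfolding of_real_sum complex_norm_square by simp
  finally show ?thesis by (rule of_real_eq_iff[THEN iffD1])
qed

lemma cs_bound:
  fixes v y :: "nat \<Rightarrow> complex"
  shows "cmod (\<Sum>j<d. v j * cnj (y j)) \<le> vnorm d v * vnorm d y"
proof -
  have "cmod (\<Sum>j<d. v j * cnj (y j)) \<le> (\<Sum>j<d. cmod (v j * cnj (y j)))"
    by (rule norm_sum)
  also have "\<dots> = (\<Sum>j<d. \<bar>cmod (v j)\<bar> * \<bar>cmod (y j)\<bar>)"
    by (simp add: norm_mult)
  also have "\<dots> \<le> L2_set (\<lambda>j. cmod (v j)) {..<d} * L2_set (\<lambda>j. cmod (y j)) {..<d}"
    by (rule L2_set_mult_ineq)
  also have "\<dots> = vnorm d v * vnorm d y"
    by (simp add: L2_set_def vnorm_def)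
  finally show ?thesis .
qed

lemma opnorm_bound:
  fixes M :: "'g::{topological_group_add, t2_space} measure"
  assumes Ms: "sets M = sets borel" and fm: "finite_measure M" and E: "E \<in> sets M"
    and U: "unitary_rep d \<pi>" and vn: "vnorm d v \<le> 1"
  shows "vnorm d (matvec d (fourier_indicator M E \<pi>) v) \<le> measure M E"
proof -
  interpret finite_measure M by (rule fm)
  have meas: "(\<lambda>t. cnj (\<pi> t j i)) \<in> borel_measurable M" if "i < d" "j < d" for i j
  proof -
    have "continuous_on UNIV (\<lambda>g. \<pi> g j i)" using U that unfolding unitary_rep_def by auto
    then have "continuous_on UNIV (\<lambda>g. cnj (\<pi> g j i))" by (intro continuous_intros)
    then have "(\<lambda>g. cnj (\<pi> g j i)) \<in> borel_measurable borel" by (rule borel_measurable_continuous_onI)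
    then show ?thesis using measurable_cong_sets[OF Ms refl] by blast
  qed
  have int: "integrable M (\<lambda>t. cnj (\<pi> t j i))" if "i < d" "j < d" for i j
    by (rule integrable_const_bound[where B=1]) (use entry_bound[OF U] that meas in auto)
  define x where "x = matvec d (fourier_indicator M E \<pi>) v"
  define h where "h i t = (\<Sum>j<d. (indicator E t *\<^sub>R cnj (\<pi> t j i)) * v j)" for i t
  have hint: "integrable M (h i)" if "i < d" for i
    unfolding h_def
    apply (rule Bochner_Integration.integrable_sum)
    apply (rule Bochner_Integration.integrable_mult_left)
    apply (rule integrable_mult_indicator[OF E])
    using int[OF that] by simp
  have xi: "x i = integral\<^sup>L M (h i)" if "i < d" for i
  proof -
    have "x i = (\<Sum>j<d. (LINT t:E|M. cnj (\<pi> t j i)) * v j)"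
      using that by (simp add: x_def matvec_def fourier_indicator_def)
    also have "\<dots> = (\<Sum>j<d. integral\<^sup>L M (\<lambda>t. (indicator E t *\<^sub>R cnj (\<pi> t j i)) * v j))"
      apply (intro sum.cong refl)
      apply (unfold set_lebesgue_integral_def)
      apply (rule Bochner_Integration.integral_mult_left[symmetric])
      apply (rule integrable_mult_indicator[OF E])
      using int[OF that] by simp
    also have "\<dots> = integral\<^sup>L M (h i)"
      unfolding h_def
      apply (rule Bochner_Integration.integral_sum[symmetric])
      apply (rule Bochner_Integration.integrable_mult_left)
      apply (rule integrable_mult_indicator[OF E])
      using int[OF that] by simp
    finally show ?thesis .
  qed
  define X where "X = vnorm d x"
  have X0: "X \<ge> 0" by (simp add: X_def vnorm_def sum_nonneg)
  define y where "y t j = (\<Sum>i<d. \<pi> t j i * x i)" for t j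
  have vy: "vnorm d (y t) = X" for t
    unfolding vnorm_def X_def y_def using norm_pres[OF U] by simp
  define g where "g t = (\<Sum>j<d. v j * cnj (y t j))" for t
  have gb: "cmod (g t) \<le> X" for t
  proof -
    have "cmod (g t) \<le> vnorm d v * vnorm d (y t)" unfolding g_def by (rule cs_bound)
    also have "\<dots> \<le> 1 * X" using vn vy[of t] X0 by (metis mult_right_mono)
    finally show ?thesis by simp
  qed
  have pw: "(\<Sum>i<d. cnj (x i) * h i t) = indicator E t *\<^sub>R g t" for t
  proof -
    have "(\<Sum>i<d. cnj (x i) * h i t) = (\<Sum>i<d. \<Sum>j<d. indicator E t *\<^sub>R (v j * (cnj (\<pi> t j i) * cnj (x i))))"
      unfolding h_def by (simp add: sum_distrib_left mult_ac)
    also have "\<dots> = (\<Sum>j<d. \<Sum>i<d. indicator E t *\<^sub>R (v j * (cnj (\<pi> t j i) * cnj (x i))))"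
      by (rule sum.swap)
    also have "\<dots> = indicator E t *\<^sub>R g t"
      unfolding g_def y_def by (simp add: scaleR_sum_right sum_distrib_left cnj_sum)
    finally show ?thesis .
  qed
  have "(of_real (X\<^sup>2) :: complex) = (\<Sum>i<d. cnj (x i) * x i)"
    unfolding X_def vnorm_def
    by (simp add: sum_nonneg of_real_sum complex_norm_square mult.commute del: of_real_power)
  also have "\<dots> = (\<Sum>i<d. cnj (x i) * integral\<^sup>L M (h i))"
    by (intro sum.cong refl) (simp add: xi)
  also have "\<dots> = integral\<^sup>L M (\<lambda>t. \<Sum>i<d. cnj (x i) * h i t)"
    using hint by (simp add: Bochner_Integration.integral_sum integral_mult_right)
  also have "\<dots> = integral\<^sup>L M (\<lambda>t. indicator E t *\<^sub>R g t)"
    by (simp add: pw)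
  finally have eq: "(of_real (X\<^sup>2) :: complex) = integral\<^sup>L M (\<lambda>t. indicator E t *\<^sub>R g t)" .
  have "X\<^sup>2 = cmod (of_real (X\<^sup>2) :: complex)" by (simp only: norm_of_real abs_power2)
  also have "\<dots> \<le> integral\<^sup>L M (\<lambda>t. norm (indicator E t *\<^sub>R g t))"
    unfolding eq by (rule integral_norm_bound)
  also have "\<dots> \<le> integral\<^sup>L M (\<lambda>t. indicator E t * X)"
  proof (rule integral_mono')
    show "integrable M (\<lambda>t. indicator E t * X)" using E by (simp add: less_top[symmetric])
    show "norm (indicator E t *\<^sub>R g t) \<le> indicator E t * X" for t
      using gb[of t] by (simp add: indicator_def)
    show "0 \<le> indicator E t * X" for t using X0 by simp
  qed
  also have "\<dots> = measure M E * X" using E by simp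
  finally have "X * X \<le> measure M E * X" by (simp add: power2_eq_square)
  then have "X \<le> measure M E" using X0
    by (metis measure_nonneg mult_right_le_imp_le order_le_less)
  then show ?thesis by (simp add: X_def x_def)
qed

lemma trivial_irr: "irreducible_unitary_rep 1 (\<lambda>(g::'g::topological_group_add) i j. (1::complex))"
proof -
  have u: "unitary_rep 1 (\<lambda>(g::'g) i j. (1::complex))"
    unfolding unitary_rep_def by auto
  have irr: "V = {\<lambda>_. 0} \<or> V = cvecs 1" if V: "csubspace 1 V" for V
  proof (cases "V = {\<lambda>_. 0}")
    case False
    have V0: "(\<lambda>_. 0) \<in> V" and Vc: "V \<subseteq> cvecs 1"
      and Vs: "\<And>c v. v \<in> V \<Longrightarrow> (\<lambda>k. c * v k) \<in> V"
      using V unfolding csubspace_def by auto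
    obtain w where w: "w \<in> V" "w \<noteq> (\<lambda>_. 0)" using False V0 by blast
    have wk: "\<And>k. k \<ge> 1 \<Longrightarrow> w k = 0" using w Vc unfolding cvecs_def by auto
    have w0: "w 0 \<noteq> 0"
    proof
      assume "w 0 = 0"
      then have "w = (\<lambda>_. 0)" using wk by (metis less_one not_le)
      then show False using w by simp
    qed
    have "cvecs 1 \<subseteq> V"
    proof
      fix u assume u: "u \<in> cvecs 1"
      have "u = (\<lambda>k. (u 0 / w 0) * w k)"
      proof
        fix k show "u k = u 0 / w 0 * w k"
          using u wk[of k] w0 unfolding cvecs_def by (cases "k = 0") auto
      qed
      then show "u \<in> V" using Vs[OF w(1)] by metis
    qed
    then show ?thesis using Vc by blast
  qed simp
  show ?thesis unfolding irreducible_unitary_rep_def using u irr by auto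
qed

lemma nu_norm_eq:
  fixes M :: "'g::{topological_group_add, t2_space} measure"
  assumes Ms: "sets M = sets borel" and fm: "finite_measure M" and E: "E \<in> sets borel"
  shows "nu_norm M E = emeasure M E"
proof -
  interpret finite_measure M by (rule fm)
  have EM: "E \<in> sets M" using E Ms by simp
  have bd: "opnorm d (fourier_indicator M E \<pi>) \<le> measure M E" if "unitary_rep d \<pi>" for d \<pi>
    unfolding opnorm_def
  proof (rule cSUP_least)
    show "{v \<in> cvecs d. vnorm d v \<le> 1} \<noteq> {}"
    proof -
      have "(\<lambda>_. 0) \<in> {v \<in> cvecs d. vnorm d v \<le> 1}" by (simp add: cvecs_def vnorm_def)
      then show ?thesis by blast
    qed
    show "vnorm d (matvec d (fourier_indicator M E \<pi>) v) \<le> measure M E"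
      if "v \<in> {v \<in> cvecs d. vnorm d v \<le> 1}" for v
      using opnorm_bound[OF Ms fm EM \<open>unitary_rep d \<pi>\<close>] that by auto
  qed
  have le: "nu_norm M E \<le> emeasure M E"
    unfolding nu_norm_def
  proof (rule SUP_least)
    fix p :: "nat \<times> ('g \<Rightarrow> nat \<Rightarrow> nat \<Rightarrow> complex)"
    assume "p \<in> {(d, \<pi>). irreducible_unitary_rep d \<pi>}"
    then have "unitary_rep (fst p) (snd p)" by (auto simp: irreducible_unitary_rep_def)
    then have "opnorm (fst p) (fourier_indicator M E (snd p)) \<le> measure M E" by (rule bd)
    then show "ennreal (opnorm (fst p) (fourier_indicator M E (snd p))) \<le> emeasure M E"
      by (simp add: emeasure_eq_measure)
  qed
  define \<pi>0 where "\<pi>0 = (\<lambda>(g::'g) (i::nat) (j::nat). (1::complex))"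
  have irr0: "irreducible_unitary_rep 1 \<pi>0" unfolding \<pi>0_def by (rule trivial_irr)
  then have u0: "unitary_rep 1 \<pi>0" by (simp add: irreducible_unitary_rep_def)
  define v0 where "v0 = (\<lambda>k::nat. if k = 0 then (1::complex) else 0)"
  have F00: "fourier_indicator M E \<pi>0 0 0 = complex_of_real (measure M E)"
  proof -
    have "(\<lambda>x. indicator E x *\<^sub>R cnj (1::complex)) = (\<lambda>x. complex_of_real (indicator E x))"
      by (simp add: scaleR_conv_of_real)
    then show ?thesis
      unfolding fourier_indicator_def \<pi>0_def set_lebesgue_integral_def
      using EM by (simp only: integral_complex_of_real integral_indicator) simp
  qed
  have "measure M E = vnorm 1 (matvec 1 (fourier_indicator M E \<pi>0) v0)"
    by (simp add: vnorm_def matvec_def v0_def F00)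
  also have "\<dots> \<le> opnorm 1 (fourier_indicator M E \<pi>0)"
    unfolding opnorm_def
  proof (rule cSUP_upper)
    show "v0 \<in> {v \<in> cvecs 1. vnorm 1 v \<le> 1}"
      by (simp add: cvecs_def vnorm_def v0_def)
    show "bdd_above ((\<lambda>v. vnorm 1 (matvec 1 (fourier_indicator M E \<pi>0) v)) ` {v \<in> cvecs 1. vnorm 1 v \<le> 1})"
      using opnorm_bound[OF Ms fm EM u0] by (auto intro!: bdd_aboveI)
  qed
  finally have "emeasure M E \<le> ennreal (opnorm 1 (fourier_indicator M E \<pi>0))"
    by (simp add: emeasure_eq_measure ennreal_leI)
  also have "\<dots> \<le> nu_norm M E"
    unfolding nu_norm_def
    by (rule SUP_upper2[of "(1, \<pi>0)"]) (use irr0 in auto)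
  finally show ?thesis using le by simp
qed

theorem lemma3p1:
  fixes M :: "'g::{topological_group_add, t2_space} measure"
    and \<Phi> :: "ennreal \<Rightarrow> ennreal"
  assumes "compact (UNIV :: 'g set)"
    and "haar_prob_measure M"
    and "young_function \<Phi>"
    and "delta2 \<Phi>"
  shows "nu_variation M UNIV < \<infinity> \<and> (\<forall>A\<in>sets borel. nu_variation M A = emeasure M A)"
proof -
  have Ms: "sets M = sets borel" and M1: "emeasure M UNIV = 1"
    using assms(2) unfolding haar_prob_measure_def by auto
  have sp: "space M = UNIV" using sets_eq_imp_space_eq[OF Ms] by simp
  have fm: "finite_measure M" by (rule finite_measureI) (simp add: sp M1)
  have var: "nu_variation M A = emeasure M A" if A: "A \<in> sets borel" for A
  proof -
    have each: "(\<Sum>E\<in>\<rho>. nu_norm M E) = emeasure M A" if "\<rho> \<in> borel_partitions A" for \<rho>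
    proof -
      have r: "finite \<rho>" "\<rho> \<subseteq> sets borel" "disjoint \<rho>" "\<Union>\<rho> = A"
        using that unfolding borel_partitions_def by auto
      have "(\<Sum>E\<in>\<rho>. nu_norm M E) = (\<Sum>E\<in>\<rho>. emeasure M E)"
        using r(2) by (intro sum.cong refl nu_norm_eq[OF Ms fm]) auto
      also have "\<dots> = emeasure M (\<Union>E\<in>\<rho>. E)"
        by (rule sum_emeasure) (use r Ms in \<open>auto simp: disjoint_family_on_def disjoint_def\<close>)
      finally show ?thesis using r(4) by simp
    qed
    have "{A} \<in> borel_partitions A" using A by (simp add: borel_partitions_def disjoint_def)
    then have ne: "borel_partitions A \<noteq> {}" by blast
    show ?thesis unfolding nu_variation_def
      using each ne by (simp add: SUP_constant)
  qed
  have "nu_variation M UNIV = 1" using var[of UNIV] M1 by simp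
  then show ?thesis using var by simp
qed

end
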